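(* If $G$ is a graph on $n$ vertices with independence number $\alpha\geq 1$, then $\operatorname{th}_{\operatorname{H}}(G)\leq\lceil n-\alpha+2\sqrt{\alpha}-1\rceil$.
   Context: All graphs are finite, simple and undirected. Hopping color change rule: a blue vertex $v$ may force a white vertex $w$ to become blue if $v$ has not previously performed a force and every neighbor of $v$ is blue. For an initial blue set $B$, a chronological list of forces of $B$ is a sequence of such forces applied one at a time until no further force is possible; its underlying unordered set is a set of forces of $B$. $B$ is a hopping forcing set if some chronological list of forces of $B$ turns all vertices blue. For a set of forces $\mathcal F$ of $B$, let $\mathcal F^{(0)}=B$ and for $t\geq1$ let $\mathcal F^{(t)}$ be the set of vertices $w\notin U_{t-1}:=\bigcup_{i=0}^{t-1}\mathcal F^{(i)}$ for which there is $(v\to w)\in\mathcal F$ with $v\in U_{t-1}$ and all neighbors of $v$ in $U_{t-1}$. $\operatorname{pt}_{\operatorname{H}}(G;\mathcal F)$ is the least $t$ with $\bigcup_{i=0}^t\mathcal F^{(i)}=V(G)$ ($\infty$ if none); $\operatorname{pt}_{\operatorname{H}}(G;B)$ is the minimum of $\operatorname{pt}_{\operatorname{H}}(G;\mathcal F)$ over sets of forces $\mathcal F$ of $B$ ($\infty$ if $B$ is not a hopping forcing set). $\operatorname{th}_{\operatorname{H}}(G)=\min_{B\subseteq V(G)}\big(|B|+\operatorname{pt}_{\operatorname{H}}(G;B)\big)$. *)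

theory Defs
  imports Complex_Main "HOL-Library.Extended_Nat"
begin

definition simple_graph :: "'a set \<Rightarrow> ('a \<Rightarrow> 'a \<Rightarrow> bool) \<Rightarrow> bool" where
  "simple_graph V E \<longleftrightarrow> finite V \<and> (\<forall>u v. E u v \<longrightarrow> u \<in> V \<and> v \<in> V)
     \<and> (\<forall>u v. E u v \<longrightarrow> E v u) \<and> (\<forall>v. \<not> E v v)"

definition nbhd :: "'a set \<Rightarrow> ('a \<Rightarrow> 'a \<Rightarrow> bool) \<Rightarrow> 'a \<Rightarrow> 'a set" where
  "nbhd V E v = {u \<in> V. E v u}"

definition independent_set :: "'a set \<Rightarrow> ('a \<Rightarrow> 'a \<Rightarrow> bool) \<Rightarrow> 'a set \<Rightarrow> bool" where
  "independent_set V E S \<longleftrightarrow> S \<subseteq> V \<and> (\<forall>u\<in>S. \<forall>v\<in>S. \<not> E u v)"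

definition independence_number :: "'a set \<Rightarrow> ('a \<Rightarrow> 'a \<Rightarrow> bool) \<Rightarrow> nat" where
  "independence_number V E = Max (card ` {S. independent_set V E S})"

definition hop_valid :: "'a set \<Rightarrow> ('a \<Rightarrow> 'a \<Rightarrow> bool) \<Rightarrow> 'a set \<Rightarrow> ('a \<times> 'a) list \<Rightarrow> 'a \<times> 'a \<Rightarrow> bool" where
  "hop_valid V E B fs f \<longleftrightarrow>
     (let S = B \<union> snd ` set fs in
      fst f \<in> S \<and> snd f \<in> V \<and> snd f \<notin> S \<and> fst f \<notin> fst ` set fs \<and> nbhd V E (fst f) \<subseteq> S)"

definition hop_chron_list :: "'a set \<Rightarrow> ('a \<Rightarrow> 'a \<Rightarrow> bool) \<Rightarrow> 'a set \<Rightarrow> ('a \<times> 'a) list \<Rightarrow> bool" where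
  "hop_chron_list V E B fs \<longleftrightarrow>
     (\<forall>i < length fs. hop_valid V E B (take i fs) (fs ! i)) \<and> \<not> (\<exists>f. hop_valid V E B fs f)"

definition hop_force_set :: "'a set \<Rightarrow> ('a \<Rightarrow> 'a \<Rightarrow> bool) \<Rightarrow> 'a set \<Rightarrow> ('a \<times> 'a) set \<Rightarrow> bool" where
  "hop_force_set V E B F \<longleftrightarrow> (\<exists>fs. hop_chron_list V E B fs \<and> F = set fs)"

definition hopping_forcing_set :: "'a set \<Rightarrow> ('a \<Rightarrow> 'a \<Rightarrow> bool) \<Rightarrow> 'a set \<Rightarrow> bool" where
  "hopping_forcing_set V E B \<longleftrightarrow> B \<subseteq> V \<and>
     (\<exists>fs. hop_chron_list V E B fs \<and> B \<union> snd ` set fs = V)"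

fun hop_blue :: "'a set \<Rightarrow> ('a \<Rightarrow> 'a \<Rightarrow> bool) \<Rightarrow> 'a set \<Rightarrow> ('a \<times> 'a) set \<Rightarrow> nat \<Rightarrow> 'a set" where
  "hop_blue V E B F 0 = B"
| "hop_blue V E B F (Suc t) = hop_blue V E B F t \<union>
     {w. w \<notin> hop_blue V E B F t \<and> (\<exists>v. (v, w) \<in> F \<and> v \<in> hop_blue V E B F t
            \<and> nbhd V E v \<subseteq> hop_blue V E B F t)}"

definition pt_H_forces :: "'a set \<Rightarrow> ('a \<Rightarrow> 'a \<Rightarrow> bool) \<Rightarrow> 'a set \<Rightarrow> ('a \<times> 'a) set \<Rightarrow> enat" where
  "pt_H_forces V E B F =
     (if \<exists>t. hop_blue V E B F t = V then enat (LEAST t. hop_blue V E B F t = V) else \<infinity>)"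

definition pt_H :: "'a set \<Rightarrow> ('a \<Rightarrow> 'a \<Rightarrow> bool) \<Rightarrow> 'a set \<Rightarrow> enat" where
  "pt_H V E B =
     (if hopping_forcing_set V E B then (INF F \<in> {F. hop_force_set V E B F}. pt_H_forces V E B F)
      else \<infinity>)"

definition th_H :: "'a set \<Rightarrow> ('a \<Rightarrow> 'a \<Rightarrow> bool) \<Rightarrow> enat" where
  "th_H V E = (INF B \<in> Pow V. enat (card B) + pt_H V E B)"

end

theory Submission
  imports Defs
begin

lemma arith_k:
  fixes a :: nat
  assumes "a \<ge> 1"
  defines "c \<equiv> nat \<lceil>2 * sqrt (real a)\<rceil>"
  shows "\<exists>k. 1 \<le> k \<and> k \<le> a \<and> k < c \<and> a \<le> k * (c - k)"
proof -
  have c0: "real c \<ge> 2 * sqrt (real a)" unfolding c_def by linarith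
  have "(2 * sqrt (real a))^2 \<le> (real c)^2"
    by (rule power_mono[OF c0]) simp
  then have "4 * real a \<le> real (c*c)" by (simp add: power2_eq_square)
  then have c4: "4 * a \<le> c * c" by linarith
  define m where "m = c div 2"
  have am: "a \<le> m * (c - m)"
  proof (cases "even c")
    case True
    then have cc: "c = 2*m" unfolding m_def by auto
    have "4*a \<le> 4*(m*m)" using c4 cc by (simp add: algebra_simps)
    then show ?thesis using cc by simp
  next
    case False
    then have cc: "c = 2*m+1" unfolding m_def by presburger
    have "c * c = 4*(m*m) + 4*m + 1" using cc by (simp add: algebra_simps)
    then have "4*a \<le> 4*(m*m) + 4*m + 1" using c4 by simp
    then have "a \<le> m*m + m" by linarith
    then show ?thesis using cc by (simp add: algebra_simps)
  qed
  show ?thesis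
  proof (cases "m \<le> a")
    case True
    have "m \<ge> 1" using am assms by (cases m) auto
    moreover have "m < c" using \<open>m \<ge> 1\<close> unfolding m_def by linarith
    ultimately show ?thesis using True am by blast
  next
    case False
    have "c - a \<ge> 1" using False unfolding m_def by linarith
    then have "a \<le> a * (c - a)" by simp
    moreover have "a < c" using False unfolding m_def by linarith
    ultimately show ?thesis using assms by blast
  qed
qed

lemma hop_blue_sub:
  assumes "B \<subseteq> V" "snd ` F \<subseteq> V"
  shows "hop_blue V E B F t \<subseteq> V"
  using assms by (induction t) (auto simp: image_subset_iff)

lemma construction:
  assumes G: "simple_graph V E" and I: "independent_set V E S" and cS: "card S = a"
    and k1: "1 \<le> k" and ka: "k \<le> a" and aT: "a \<le> k * (T + 1)"
  shows "th_H V E \<le> enat (card V - a + k + T)"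
proof -
  have finV: "finite V" using G unfolding simple_graph_def by blast
  have SV: "S \<subseteq> V" using I unfolding independent_set_def by blast
  have indep: "\<And>u v. u \<in> S \<Longrightarrow> v \<in> S \<Longrightarrow> \<not> E u v" using I unfolding independent_set_def by blast
  have finS: "finite S" using finV SV finite_subset by blast
  obtain ss where ss: "set ss = S" "distinct ss" using finite_distinct_list[OF finS] by blast
  have len: "length ss = a" using ss cS distinct_card by fastforce
  define X where "X = V - S"
  define B where "B = X \<union> set (take k ss)"
  define fs where "fs = map (\<lambda>i. (ss!i, ss!(i+k))) [0..<a-k]"
  have ssS: "\<And>j. j < a \<Longrightarrow> ss!j \<in> S" using ss len by auto
  have ssinj: "\<And>i j. i < a \<Longrightarrow> j < a \<Longrightarrow> ss!i = ss!j \<longleftrightarrow> i = j"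
    using ss(2) len nth_eq_iff_index_eq by metis
  have nb: "\<And>j. j < a \<Longrightarrow> nbhd V E (ss!j) \<subseteq> X"
    using ssS indep unfolding nbhd_def X_def by blast
  have settake: "set (take k ss) = (\<lambda>j. ss!j) ` {..<k}"
    using ka len nth_image[of k ss] by (simp add: lessThan_atLeast0)
  have blue: "B \<union> snd ` set (take i fs) = X \<union> (\<lambda>j. ss!j) ` {..<i+k}" if "i \<le> a - k" for i
  proof -
    have "take i fs = map (\<lambda>i. (ss!i, ss!(i+k))) [0..<i]"
      using that unfolding fs_def by (simp add: take_map)
    then have "snd ` set (take i fs) = (\<lambda>j. ss!(j+k)) ` {..<i}" by (simp add: image_image) (use lessThan_atLeast0 in force)
    moreover have "(\<lambda>j. ss!j) ` {..<k} \<union> (\<lambda>j. ss!(j+k)) ` {..<i} = (\<lambda>j. ss!j) ` {..<i+k}"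
    proof (rule set_eqI, rule iffI)
      fix x assume "x \<in> (\<lambda>j. ss!j) ` {..<i+k}"
      then obtain j where j: "j < i + k" "x = ss!j" by auto
      show "x \<in> (\<lambda>j. ss!j) ` {..<k} \<union> (\<lambda>j. ss!(j+k)) ` {..<i}"
      proof (cases "j < k")
        case True then show ?thesis using j by auto
      next
        case False
        then have "x = ss!((j-k)+k)" "j - k < i" using j by auto
        then show ?thesis by blast
      qed
    qed auto
    ultimately show ?thesis unfolding B_def settake by (simp add: Un_assoc)
  qed
  have fst_take: "fst ` set (take i fs) = (\<lambda>j. ss!j) ` {..<i}" if "i \<le> a - k" for i
  proof -
    have "take i fs = map (\<lambda>i. (ss!i, ss!(i+k))) [0..<i]"
      using that unfolding fs_def by (simp add: take_map)
    then show ?thesis by (simp add: image_image) (use lessThan_atLeast0 in force)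
  qed
  have allblue: "B \<union> snd ` set fs = V"
  proof -
    have "B \<union> snd ` set (take (a-k) fs) = X \<union> (\<lambda>j. ss!j) ` {..<a}"
      using blue[of "a-k"] ka by simp
    moreover have "take (a-k) fs = fs" unfolding fs_def by simp
    moreover have "(\<lambda>j. ss!j) ` {..<a} = S" using ss len by (auto simp: set_conv_nth)
    ultimately show ?thesis unfolding X_def using SV by auto
  qed
  have BV: "B \<subseteq> V" using allblue by blast
  have chron: "hop_chron_list V E B fs"
    unfolding hop_chron_list_def
  proof (intro conjI allI impI)
    fix i assume i: "i < length fs"
    then have ia: "i < a - k" unfolding fs_def by simp
    have fi: "fs ! i = (ss!i, ss!(i+k))" using ia unfolding fs_def by simp
    have bl: "B \<union> snd ` set (take i fs) = X \<union> (\<lambda>j. ss!j) ` {..<i+k}" using blue ia by simp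
    have ft: "fst ` set (take i fs) = (\<lambda>j. ss!j) ` {..<i}" using fst_take ia by simp
    have "ss!(i+k) \<notin> (\<lambda>j. ss!j) ` {..<i+k}" using ssinj ia by auto
    moreover have "ss!(i+k) \<notin> X" using ssS ia unfolding X_def by auto
    moreover have "ss!i \<notin> (\<lambda>j. ss!j) ` {..<i}" using ssinj ia by auto
    moreover have "ss!i \<in> (\<lambda>j. ss!j) ` {..<i+k}" using k1 by auto
    moreover have "ss!(i+k) \<in> V" using ssS ia SV by auto
    moreover have "nbhd V E (ss!i) \<subseteq> X" using nb ia by simp
    ultimately show "hop_valid V E B (take i fs) (fs ! i)"
      unfolding hop_valid_def Let_def fi bl ft by auto
  next
    show "\<not> (\<exists>f. hop_valid V E B fs f)"
      unfolding hop_valid_def Let_def allblue by auto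
  qed
  have hfs: "hopping_forcing_set V E B"
    unfolding hopping_forcing_set_def using BV chron allblue by blast
  have hfF: "hop_force_set V E B (set fs)"
    unfolding hop_force_set_def using chron by blast
  have grow: "X \<union> (\<lambda>j. ss!j) ` {..<min a (k*(t+1))} \<subseteq> hop_blue V E B (set fs) t" for t
  proof (induction t)
    case 0
    have "X \<union> (\<lambda>j. ss!j) ` {..<min a k} \<subseteq> B" unfolding B_def settake using ka by auto
    then show ?case by simp
  next
    case (Suc t)
    show ?case
    proof
      fix x assume "x \<in> X \<union> (\<lambda>j. ss!j) ` {..<min a (k*(Suc t+1))}"
      then consider "x \<in> X \<union> (\<lambda>j. ss!j) ` {..<min a (k*(t+1))}"
        | j where "x = ss!j" "j < a" "k*(t+1) \<le> j" "j < k*(t+2)" by force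
      then show "x \<in> hop_blue V E B (set fs) (Suc t)"
      proof cases
        case 1 then show ?thesis using Suc by auto
      next
        case 2
        have "k \<le> k*(t+1)" by simp
        then have jk: "k \<le> j" using 2 by linarith
        define i where "i = j - k"
        have ij: "j = i + k" "i < a - k" using jk 2 unfolding i_def by auto
        have "i < k*(t+1)" using 2 jk unfolding i_def by (simp add: algebra_simps)
        then have "ss!i \<in> hop_blue V E B (set fs) t" using Suc ij by auto
        moreover have "(ss!i, ss!j) \<in> set fs" using ij unfolding fs_def by auto
        moreover have "nbhd V E (ss!i) \<subseteq> hop_blue V E B (set fs) t"
        proof -
          have "i < a" using ij by simp
          then have "nbhd V E (ss!i) \<subseteq> X" using nb by blast
          moreover have "X \<subseteq> hop_blue V E B (set fs) t" using Suc.IH by blast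
          ultimately show ?thesis by blast
        qed
        ultimately show ?thesis using 2 by auto
      qed
    qed
  qed
  have FV: "snd ` set fs \<subseteq> V" using allblue by blast
  have "V \<subseteq> hop_blue V E B (set fs) T"
  proof -
    have "min a (k*(T+1)) = a" using aT by simp
    moreover have "(\<lambda>j. ss!j) ` {..<a} = S" using ss len by (auto simp: set_conv_nth)
    ultimately show ?thesis using grow[of T] unfolding X_def by auto
  qed
  then have eqV: "hop_blue V E B (set fs) T = V" using hop_blue_sub[OF BV FV] by blast
  have "pt_H_forces V E B (set fs) \<le> enat T"
    unfolding pt_H_forces_def using eqV by (auto intro: Least_le)
  moreover have "pt_H V E B \<le> pt_H_forces V E B (set fs)"
    unfolding pt_H_def using hfs hfF by (auto intro: INF_lower)
  ultimately have pt: "pt_H V E B \<le> enat T" by simp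
  have "card B = card X + k"
  proof -
    have "card (set (take k ss)) = k" using ss(2) len ka by (simp add: distinct_card)
    moreover have "X \<inter> set (take k ss) = {}" unfolding X_def using ss set_take_subset by fastforce
    moreover have "finite X" unfolding X_def using finV by simp
    ultimately show ?thesis unfolding B_def by (simp add: card_Un_disjoint)
  qed
  moreover have "card X = card V - a" unfolding X_def using cS SV finS card_Diff_subset by metis
  ultimately have cB: "card B = card V - a + k" by simp
  have "th_H V E \<le> enat (card B) + pt_H V E B"
    unfolding th_H_def using BV by (auto intro: INF_lower)
  also have "\<dots> \<le> enat (card B) + enat T" using pt by (rule add_left_mono)
  finally show ?thesis using cB by simp
qed


theorem proposition3p10:
  fixes V :: "'a set" and E :: "'a \<Rightarrow> 'a \<Rightarrow> bool"
  assumes "simple_graph V E"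
    and "independence_number V E \<ge> 1"
  shows "th_H V E \<le> enat (nat \<lceil>real (card V) - real (independence_number V E)
            + 2 * sqrt (real (independence_number V E)) - 1\<rceil>)"
proof -
  define a where "a = independence_number V E"
  have finV: "finite V" using assms(1) unfolding simple_graph_def by blast
  have fin: "finite (card ` {S. independent_set V E S})"
  proof -
    have "{S. independent_set V E S} \<subseteq> Pow V" unfolding independent_set_def by blast
    then have "finite {S. independent_set V E S}" using finV finite_subset by blast
    then show ?thesis by (rule finite_imageI)
  qed
  have ne: "card ` {S. independent_set V E S} \<noteq> {}"
  proof -
    have "independent_set V E {}" unfolding independent_set_def by blast
    then show ?thesis by blast
  qed
  obtain S where S: "independent_set V E S" "card S = a"
    using Max_in[OF fin ne] unfolding a_def independence_number_def by auto
  have a1: "a \<ge> 1" using assms(2) a_def by simp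
  have aV: "a \<le> card V" using S finV card_mono unfolding independent_set_def by metis
  define c where "c = nat \<lceil>2 * sqrt (real a)\<rceil>"
  obtain k where k: "1 \<le> k" "k \<le> a" "k < c" "a \<le> k * (c - k)"
    using arith_k[OF a1] unfolding c_def by blast
  have "(c - k - 1) + 1 = c - k" using k by simp
  then have "a \<le> k * ((c - k - 1) + 1)" using k by metis
  then have "th_H V E \<le> enat (card V - a + k + (c - k - 1))"
    by (rule construction[OF assms(1) S(1) S(2) k(1) k(2)])
  moreover have "card V - a + k + (c - k - 1) = nat \<lceil>real (card V) - real a + 2 * sqrt (real a) - 1\<rceil>"
  proof -
    have "- 1 < 2 * sqrt (real a)" using real_sqrt_ge_zero[of "real a"] by linarith
    then have "0 \<le> \<lceil>2 * sqrt (real a)\<rceil>" by simp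
    then have c_int: "int c = \<lceil>2 * sqrt (real a)\<rceil>" unfolding c_def by simp
    have "\<lceil>real (card V) - real a + 2 * sqrt (real a) - 1\<rceil> = \<lceil>2 * sqrt (real a) + of_int (int (card V) - int a - 1)\<rceil>"
      by (simp add: algebra_simps)
    also have "\<dots> = \<lceil>2 * sqrt (real a)\<rceil> + (int (card V) - int a - 1)"
      by (rule ceiling_add_of_int)
    finally have "\<lceil>real (card V) - real a + 2 * sqrt (real a) - 1\<rceil> = int c + (int (card V) - int a - 1)"
      using c_int by simp
    then show ?thesis using k aV by linarith
  qed
  ultimately show ?thesis unfolding a_def[symmetric] by simp
qed

end
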